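(* Under the standing assumption (A), the ODE $$\tfrac12\sigma^2 v''(x)+f(v'(x))-cv(x)=0,\quad x\ge0,\qquad v(0)=0,$$ has a bounded classical solution $v\in C^2([0,\infty))$ with the following properties: (i) $\lim_{x\to\infty}v(x)=f(0)/c$; (ii) $v'(0)>0$ and $\lim_{x\to\infty}v'(x)=0$; (iii) $v$ is increasing and concave on $[0,\infty)$.
   Context: Constants $\mu\in\mathbb R$, $\sigma>0$, $c>0$, $a>0$, $\lambda>0$ are fixed. Standing assumption (A): (i) $a>\max\{1,2\mu\}$; (ii) $\mu>\max\{c,\sigma^2/2\}$. The function $f:\mathbb R\to\mathbb R$ is $f(z)=\mu z+\lambda\ln\big[\lambda(e^{\frac{a}{\lambda}(1-z)}-1)/(1-z)\big]$ for $z\ne1$ and $f(1)=\mu+\lambda\ln a$ (it is $C^\infty$). *)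

theory Defs
  imports "HOL-Analysis.Analysis"
begin

definition fA :: "real \<Rightarrow> real \<Rightarrow> real \<Rightarrow> real \<Rightarrow> real" where
  "fA mu lam a z =
     (if z = 1 then mu + lam * ln a
      else mu * z + lam * ln (lam * (exp ((a / lam) * (1 - z)) - 1) / (1 - z)))"

end

theory Submission
  imports Defs
begin

definition J :: "real \<Rightarrow> real" where
  "J s = (if s = 0 then 1 else (exp s - 1) / s)"

lemma J_integral: "((\<lambda>u. exp (s*u)) has_integral J s) {0..1}"
proof (cases "s = 0")
  case True
  then show ?thesis using has_integral_const_real[of 1 0 1] by (simp add: J_def)
next
  case False
  have "((\<lambda>u. exp (s*u)) has_integral ((\<lambda>u. exp (s*u) / s) 1 - (\<lambda>u. exp (s*u) / s) 0)) {0..1}"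
    apply (rule fundamental_theorem_of_calculus)
     apply simp
    apply (rule has_vector_derivative_at_within)
    unfolding has_real_derivative_iff_has_vector_derivative[symmetric]
    using False by (auto intro!: derivative_eq_intros)
  then show ?thesis using False by (simp add: J_def diff_divide_distrib)
qed

lemma J_pos: "J s > 0"
proof -
  have "exp s - 1 > 0 \<longleftrightarrow> s > 0" by simp
  moreover have "exp s - 1 < 0 \<longleftrightarrow> s < 0" by simp
  ultimately show ?thesis unfolding J_def
    by (auto simp: divide_pos_pos divide_neg_neg linorder_neq_iff)
qed

lemma J_mono: assumes "t \<le> s" shows "J t \<le> J s"
  apply (rule has_integral_le[OF J_integral J_integral])
  using assms by (auto intro: mult_right_mono)

lemma J_exp: assumes "t \<le> s" shows "J s \<le> exp (s - t) * J t"
proof -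
  have "((\<lambda>u. exp (s - t) * exp (t*u)) has_integral exp (s - t) * J t) {0..1}"
    by (intro has_integral_mult_right J_integral)
  then show ?thesis
    apply (rule has_integral_le[OF J_integral])
    apply (subst exp_add[symmetric])
  proof -
    fix x :: real assume x: "x \<in> {0..1}"
    have "x*(s-t) \<le> 1*(s-t)" using x assms by (intro mult_right_mono) auto
    then show "exp (s * x) \<le> exp (s - t + t * x)" by (simp add: algebra_simps)
  qed
qed

lemma lnJ_lip: "\<bar>ln (J s) - ln (J t)\<bar> \<le> \<bar>s - t\<bar>"
proof -
  have *: "0 \<le> ln (J s) - ln (J t) \<and> ln (J s) - ln (J t) \<le> s - t" if "t \<le> s" for s t
  proof -
    have "ln (J s) \<le> ln (exp (s - t) * J t)"
      using J_exp[OF that] J_pos[of s] J_pos[of t] by (simp only: ln_le_cancel_iff mult_pos_pos exp_gt_zero)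
    also have "\<dots> = s - t + ln (J t)" using ln_mult_pos[OF exp_gt_zero J_pos[of t], of "s - t"] by simp
    finally have "ln (J s) \<le> s - t + ln (J t)" .
    moreover have "ln (J t) \<le> ln (J s)" using J_mono[OF that] J_pos[of s] J_pos[of t] by simp
    ultimately show ?thesis by linarith
  qed
  show ?thesis using *[of t s] *[of s t] by (cases "t \<le> s") auto
qed

lemma fA_J:
  assumes "lam > 0" "a > 0"
  shows "fA mu lam a z = mu * z + lam * ln a + lam * ln (J (a / lam * (1 - z)))"
proof (cases "z = 1")
  case True then show ?thesis unfolding fA_def J_def by simp
next
  case False
  let ?s = "a / lam * (1 - z)"
  have s0: "?s \<noteq> 0" using False assms by simp
  have "lam * (exp ?s - 1) / (1 - z) = a * J ?s"
    using s0 False assms by (simp add: J_def field_simps)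
  moreover have "ln (a * J ?s) = ln a + ln (J ?s)" using ln_mult_pos[OF assms(2) J_pos] by simp
  ultimately show ?thesis using False by (simp add: fA_def algebra_simps)
qed

lemma fA_lip:
  assumes "lam > 0" "a > 0"
  shows "\<bar>fA mu lam a z - fA mu lam a w\<bar> \<le> (\<bar>mu\<bar> + a) * \<bar>z - w\<bar>"
proof -
  have "\<bar>ln (J (a / lam * (1 - z))) - ln (J (a / lam * (1 - w)))\<bar> \<le> \<bar>a / lam * (1 - z) - a / lam * (1 - w)\<bar>"
    by (rule lnJ_lip)
  also have "a / lam * (1 - z) - a / lam * (1 - w) = (a / lam) * (w - z)" by (simp add: add_divide_distrib[symmetric] algebra_simps)
  also have "\<bar>(a / lam) * (w - z)\<bar> = a / lam * \<bar>z - w\<bar>" using assms by (simp add: abs_mult)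
  finally have h: "lam * \<bar>ln (J (a / lam * (1 - z))) - ln (J (a / lam * (1 - w)))\<bar> \<le> a * \<bar>z - w\<bar>"
    using assms by (simp add: field_simps)
  define L where "L = ln (J (a / lam * (1 - z))) - ln (J (a / lam * (1 - w)))"
  have "fA mu lam a z - fA mu lam a w = mu * (z - w) + lam * L"
    unfolding fA_J[OF assms] L_def by (simp add: right_diff_distrib)
  then have "\<bar>fA mu lam a z - fA mu lam a w\<bar> = \<bar>mu * (z - w) + lam * L\<bar>" by simp
  also have "\<dots> \<le> \<bar>mu * (z - w)\<bar> + \<bar>lam * L\<bar>" by (rule abs_triangle_ineq)
  also have "\<dots> = \<bar>mu\<bar> * \<bar>z - w\<bar> + lam * \<bar>ln (J (a / lam * (1 - z))) - ln (J (a / lam * (1 - w)))\<bar>"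
    using assms by (simp add: abs_mult L_def)
  also have "\<dots> \<le> (\<bar>mu\<bar> + a) * \<bar>z - w\<bar>" using h by (simp add: algebra_simps)
  finally show ?thesis .
qed

lemma fA0_pos:
  assumes "lam > 0" "a > 1"
  shows "fA mu lam a 0 > 0"
proof -
  have "J 0 \<le> J (a / lam)" using assms by (intro J_mono) simp
  then have "ln (J (a/lam)) \<ge> 0" by (simp add: J_def)
  moreover have "ln a > 0" using assms by simp
  ultimately show ?thesis using assms fA_J[of lam a mu 0] by (simp add: add_pos_nonneg)
qed

lemma exp_has_integral:
  fixes w m :: real
  assumes "w > 0" "m \<ge> 0"
  shows "((\<lambda>s. exp (w * s)) has_integral ((exp (w*m) - 1) / w)) {0..m}"
proof -
  have "((\<lambda>s. exp (w * s)) has_integral ((\<lambda>s. exp (w * s) / w) m - (\<lambda>s. exp (w * s) / w) 0)) {0..m}"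
    apply (rule fundamental_theorem_of_calculus[of 0 m "\<lambda>s. exp (w * s) / w"])
     apply (simp add: assms)
    apply (rule has_vector_derivative_at_within)
    unfolding has_real_derivative_iff_has_vector_derivative[symmetric]
    using assms by (auto intro!: derivative_eq_intros)
  then show ?thesis by (simp add: diff_divide_distrib)
qed

lemma int_est:
  fixes h :: "real \<Rightarrow> 'a::banach"
  assumes "continuous_on {0..m} h" "m \<ge> 0" "w > 0"
    and "\<And>s. s \<in> {0..m} \<Longrightarrow> norm (h s) \<le> A + C * exp (w * s)"
  shows "norm (integral {0..m} h) \<le> A*m + C*((exp (w*m) - 1) / w)"
proof -
  have hi: "((\<lambda>s. A + C * exp (w * s)) has_integral (A*m + C*((exp (w*m) - 1) / w))) {0..m}"
    using has_integral_add[OF has_integral_const_real[of A 0 m] has_integral_mult_right[OF exp_has_integral[OF assms(3,2)], of C]]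
    using assms(2) by (simp add: algebra_simps)
  have "norm (integral {0..m} h) \<le> integral {0..m} (\<lambda>s. A + C * exp (w * s))"
    apply (rule integral_norm_bound_integral)
    using assms hi integrable_continuous_interval by (auto simp: has_integral_integrable)
  also have "\<dots> = A*m + C*((exp (w*m) - 1) / w)" using hi by (rule integral_unique)
  finally show ?thesis .
qed

lemma m_exp_bound:
  fixes w m :: real
  assumes "w > 0" "m \<ge> 0"
  shows "m * exp (-(w*m)) \<le> 1 / w"
proof -
  have "1 + w*m \<le> exp (w*m)" using exp_ge_add_one_self[of "w*m"] by simp
  then have "w*m \<le> exp (w*m)" by linarith
  then have "w*m * exp (-(w*m)) \<le> exp (w*m) * exp (-(w*m))"
    by (intro mult_right_mono) auto
  also have "\<dots> = 1" by (simp add: exp_minus_inverse)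
  finally show ?thesis using assms by (simp add: field_simps)
qed

lemma exp_frac_bound:
  fixes w m :: real
  assumes "w > 0" "m \<ge> 0"
  shows "exp (-(w*m)) * ((exp (w*m) - 1) / w) \<le> 1 / w"
proof -
  have "exp (-(w*m)) * ((exp (w*m) - 1) / w) = (exp (w*m) * exp (-(w*m)) - exp (-(w*m))) / w"
    by (metis (no_types) mult.commute mult_1_right right_diff_distrib times_divide_eq_right)
  also have "\<dots> = (1 - exp (-(w*m))) / w" by (simp add: exp_minus_inverse)
  also have "\<dots> \<le> 1 / w" using assms by (intro divide_right_mono) auto
  finally show ?thesis .
qed

locale lipode =
  fixes F :: "'a::euclidean_space \<Rightarrow> 'a" and L :: real
  assumes L_pos: "L > 0" and lip: "\<And>x y. norm (F x - F y) \<le> L * norm (x - y)"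
begin

lemma F_cont: "continuous_on S F"
proof -
  have "lipschitz_on L UNIV F" unfolding lipschitz_on_def using lip L_pos by (auto simp: dist_norm)
  then show ?thesis using lipschitz_on_continuous_on continuous_on_subset by blast
qed

lemma F_bound: "norm (F x) \<le> norm (F 0) + L * norm x"
  using lip[of x 0] norm_triangle_ineq2[of "F x" "F 0"] by simp

definition g :: "(real \<Rightarrow>\<^sub>C 'a) \<Rightarrow> real \<Rightarrow> 'a" where
  "g \<psi> s = F (exp (2*L * s) *\<^sub>R apply_bcontfun \<psi> s)"

lemma g_cont: "continuous_on S (g \<psi>)"
  unfolding g_def
  by (intro continuous_on_compose2[OF F_cont[of UNIV]] continuous_intros continuous_on_apply_bcontfun) auto

lemma g_int: "g \<psi> integrable_on {a..b}"
  by (rule integrable_continuous_interval[OF g_cont])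

lemma bcontfun_bound: "\<exists>B\<ge>0. \<forall>s. norm (apply_bcontfun \<psi> s) \<le> B"
proof -
  have "bounded (range (apply_bcontfun \<psi>))" by simp
  then obtain B where B: "\<And>s. norm (apply_bcontfun \<psi> s) \<le> B" unfolding bounded_iff by auto
  have "B \<ge> 0" using B[of undefined] norm_ge_zero[of "apply_bcontfun \<psi> undefined"] by linarith
  with B show ?thesis by blast
qed

lemma g_bound:
  assumes "\<And>s. norm (apply_bcontfun \<psi> s) \<le> B"
  shows "norm (g \<psi> s) \<le> norm (F 0) + (L*B) * exp (2*L * s)"
proof -
  have "norm (g \<psi> s) \<le> norm (F 0) + L * norm (exp (2*L * s) *\<^sub>R apply_bcontfun \<psi> s)"
    unfolding g_def by (rule F_bound)
  also have "norm (exp (2*L * s) *\<^sub>R apply_bcontfun \<psi> s) \<le> exp (2*L * s) * B"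
    using assms[of s] by (simp add: mult_left_mono)
  finally show ?thesis using L_pos by (simp add: algebra_simps mult_left_mono)
qed

lemma g_lip:
  shows "norm (g \<psi>1 s - g \<psi>2 s) \<le> (L * dist \<psi>1 \<psi>2) * exp (2*L * s)"
proof -
  have "norm (g \<psi>1 s - g \<psi>2 s) \<le> L * norm (exp (2*L * s) *\<^sub>R apply_bcontfun \<psi>1 s - exp (2*L * s) *\<^sub>R apply_bcontfun \<psi>2 s)"
    unfolding g_def by (rule lip)
  also have "\<dots> = L * (exp (2*L * s) * dist (apply_bcontfun \<psi>1 s) (apply_bcontfun \<psi>2 s))"
    by (simp add: dist_norm flip: scaleR_diff_right)
  also have "\<dots> \<le> L * (exp (2*L * s) * dist \<psi>1 \<psi>2)"
    using L_pos dist_bounded by (intro mult_left_mono) auto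
  finally show ?thesis by (simp add: algebra_simps)
qed

definition Tfun :: "'a \<Rightarrow> (real \<Rightarrow>\<^sub>C 'a) \<Rightarrow> real \<Rightarrow> 'a" where
  "Tfun y0 \<psi> t = exp (-(2*L*max 0 t)) *\<^sub>R (y0 + integral {0..max 0 t} (g \<psi>))"

lemma intfun_cont: "continuous_on UNIV (\<lambda>t. integral {0..max 0 t} (g \<psi>))"
proof (rule continuous_at_imp_continuous_on, intro ballI)
  fix t :: real
  let ?b = "\<bar>t\<bar> + 1"
  have "continuous_on {0..?b} (\<lambda>u. integral {0..u} (g \<psi>))"
    by (rule indefinite_integral_continuous_1[OF g_int])
  then have "continuous_on {-?b<..<?b} (\<lambda>t. integral {0..max 0 t} (g \<psi>))"
    by (rule continuous_on_compose2) (auto intro!: continuous_intros)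
  then show "isCont (\<lambda>t. integral {0..max 0 t} (g \<psi>)) t"
    using continuous_on_eq_continuous_at[of "{-?b<..<?b}"] by fastforce
qed

lemma Tfun_bcontfun: "Tfun y0 \<psi> \<in> bcontfun"
proof -
  have c: "continuous_on UNIV (Tfun y0 \<psi>)"
    unfolding Tfun_def by (intro continuous_intros intfun_cont)
  obtain B where B: "B \<ge> 0" "\<And>s. norm (apply_bcontfun \<psi> s) \<le> B" using bcontfun_bound[of \<psi>] by blast
  have "norm (Tfun y0 \<psi> t) \<le> norm y0 + norm (F 0) / (2*L) + L*B / (2*L)" for t
  proof -
    let ?m = "max 0 t"
    have ie: "norm (integral {0..?m} (g \<psi>)) \<le> norm (F 0) * ?m + (L*B) * ((exp (2*L*?m) - 1) / (2*L))"
      by (rule int_est) (use g_cont L_pos g_bound[OF B(2)] in auto)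
    have "norm (Tfun y0 \<psi> t) = exp (-(2*L*?m)) * norm (y0 + integral {0..?m} (g \<psi>))"
      unfolding Tfun_def by simp
    also have "\<dots> \<le> exp (-(2*L*?m)) * (norm y0 + (norm (F 0) * ?m + (L*B) * ((exp (2*L*?m) - 1) / (2*L))))"
      using ie norm_triangle_ineq[of y0 "integral {0..?m} (g \<psi>)"] by (intro mult_left_mono) (linarith, simp)
    also have "\<dots> = exp (-(2*L*?m)) * norm y0 + norm (F 0) * (?m * exp (-(2*L*?m))) + (L*B) * (exp (-(2*L*?m)) * ((exp (2*L*?m) - 1) / (2*L)))"
      by (simp add: algebra_simps)
    also have "\<dots> \<le> norm y0 + norm (F 0) * (1 / (2*L)) + (L*B) * (1/(2*L))"
      apply (intro add_mono mult_left_mono m_exp_bound exp_frac_bound)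
      using L_pos B by (auto intro!: mult_left_le_one_le)
    finally show ?thesis by simp
  qed
  then have "bounded (range (Tfun y0 \<psi>))" unfolding bounded_iff by blast
  with c show ?thesis unfolding bcontfun_def by simp
qed

definition Top :: "'a \<Rightarrow> (real \<Rightarrow>\<^sub>C 'a) \<Rightarrow> (real \<Rightarrow>\<^sub>C 'a)" where
  "Top y0 \<psi> = Bcontfun (Tfun y0 \<psi>)"

lemma Top_apply: "apply_bcontfun (Top y0 \<psi>) t = Tfun y0 \<psi> t"
  unfolding Top_def using Bcontfun_inverse[OF Tfun_bcontfun] by simp

lemma Top_contr: "dist (Top y0 \<psi>1) (Top y0 \<psi>2) \<le> (1/2) * dist \<psi>1 \<psi>2"
proof (rule dist_bound)
  fix t :: real
  let ?m = "max 0 t" and ?D = "dist \<psi>1 \<psi>2"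
  have "integral {0..?m} (g \<psi>1) - integral {0..?m} (g \<psi>2) = integral {0..?m} (\<lambda>s. g \<psi>1 s - g \<psi>2 s)"
    by (simp add: integral_diff g_int)
  moreover have "norm (integral {0..?m} (\<lambda>s. g \<psi>1 s - g \<psi>2 s)) \<le> 0 * ?m + (L*?D) * ((exp (2*L*?m) - 1) / (2*L))"
    by (rule int_est) (use L_pos g_lip in \<open>auto intro!: continuous_intros g_cont\<close>)
  ultimately have "dist (Tfun y0 \<psi>1 t) (Tfun y0 \<psi>2 t) \<le> exp (-(2*L*?m)) * ((L*?D) * ((exp (2*L*?m) - 1) / (2*L)))"
    unfolding Tfun_def dist_norm by (simp flip: scaleR_diff_right add: mult_left_mono)
  also have "\<dots> = (L*?D) * (exp (-(2*L*?m)) * ((exp (2*L*?m) - 1) / (2*L)))" by simp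
  also have "\<dots> \<le> (L*?D) * (1/(2*L))"
    using L_pos by (intro mult_left_mono exp_frac_bound) auto
  also have "\<dots> = (1/2) * ?D" using L_pos by simp
  finally show "dist (Top y0 \<psi>1 t) (Top y0 \<psi>2 t) \<le> (1/2) * ?D" by (simp add: Top_apply)
qed

lemma Top_y0: "dist (Top y0 \<psi>) (Top y1 \<psi>) \<le> dist y0 y1"
proof (rule dist_bound)
  fix t :: real
  have "dist (Tfun y0 \<psi> t) (Tfun y1 \<psi> t) = exp (-(2*L*max 0 t)) * dist y0 y1"
    unfolding Tfun_def dist_norm by (simp flip: scaleR_diff_right)
  also have "\<dots> \<le> dist y0 y1" using L_pos by (intro mult_left_le_one_le) auto
  finally show "dist (Top y0 \<psi> t) (Top y1 \<psi> t) \<le> dist y0 y1" by (simp add: Top_apply)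
qed

definition fp :: "'a \<Rightarrow> (real \<Rightarrow>\<^sub>C 'a)" where
  "fp y0 = (THE \<psi>. Top y0 \<psi> = \<psi>)"

lemma fp_fix: "Top y0 (fp y0) = fp y0"
proof -
  have "\<exists>!\<psi>. Top y0 \<psi> = \<psi>"
    by (rule banach_fix_type[of "1/2"]) (use Top_contr in auto)
  then show ?thesis unfolding fp_def by (rule theI')
qed

lemma fp_dep: "dist (fp y0) (fp y1) \<le> 2 * dist y0 y1"
proof -
  have "dist (fp y0) (fp y1) = dist (Top y0 (fp y0)) (Top y1 (fp y1))" by (simp add: fp_fix)
  also have "\<dots> \<le> dist (Top y0 (fp y0)) (Top y0 (fp y1)) + dist (Top y0 (fp y1)) (Top y1 (fp y1))"
    by (rule dist_triangle)
  also have "\<dots> \<le> (1/2) * dist (fp y0) (fp y1) + dist y0 y1"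
    by (intro add_mono Top_contr Top_y0)
  finally show ?thesis by simp
qed

definition S :: "'a \<Rightarrow> real \<Rightarrow> 'a" where
  "S y0 t = exp (2*L*t) *\<^sub>R apply_bcontfun (fp y0) t"

lemma g_fp: "g (fp y0) s = F (S y0 s)" unfolding g_def S_def by simp

lemma S_int: "t \<ge> 0 \<Longrightarrow> S y0 t = y0 + integral {0..t} (\<lambda>s. F (S y0 s))"
proof -
  assume t: "t \<ge> 0"
  have "S y0 t = exp (2*L*t) *\<^sub>R Tfun y0 (fp y0) t"
    unfolding S_def by (metis Top_apply fp_fix)
  also have "\<dots> = y0 + integral {0..t} (g (fp y0))"
    unfolding Tfun_def using t by (simp add: exp_minus)
  finally show ?thesis by (simp add: g_fp[abs_def])
qed

lemma S_0: "S y0 0 = y0" using S_int[of 0] by simp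

lemma S_cont: "continuous_on A (S y0)"
  unfolding S_def by (intro continuous_intros) auto

lemma S_deriv:
  assumes "t \<ge> 0"
  shows "(S y0 has_vector_derivative F (S y0 t)) (at t within {0..})"
proof -
  have Fc: "continuous_on {0..t+1} (\<lambda>s. F (S y0 s))"
    by (rule continuous_on_compose2[OF F_cont S_cont]) auto
  have "((\<lambda>u. integral {0..u} (\<lambda>s. F (S y0 s))) has_vector_derivative F (S y0 t)) (at t within {0..t+1})"
    by (rule integral_has_vector_derivative[OF Fc]) (use assms in auto)
  moreover have "at t within {0..t+1} = at t within {0..}"
    by (rule at_within_nhd[where S="{..<t+1}"]) auto
  ultimately have "((\<lambda>u. y0 + integral {0..u} (\<lambda>s. F (S y0 s))) has_vector_derivative F (S y0 t)) (at t within {0..})"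
    by (auto intro!: derivative_eq_intros)
  then show ?thesis
    by (rule has_vector_derivative_transform[rotated 2]) (use assms S_int in auto)
qed

lemma S_dep:
  assumes "t \<ge> 0"
  shows "norm (S y0 t - S y1 t) \<le> 2 * exp (2*L*t) * norm (y0 - y1)"
proof -
  have "norm (S y0 t - S y1 t) = exp (2*L*t) * dist (apply_bcontfun (fp y0) t) (apply_bcontfun (fp y1) t)"
    unfolding S_def dist_norm by (simp flip: scaleR_diff_right)
  also have "\<dots> \<le> exp (2*L*t) * (2 * dist y0 y1)"
    by (intro mult_left_mono order.trans[OF dist_bounded fp_dep]) auto
  finally show ?thesis by (simp add: dist_norm)
qed

end

lemma deriv_ge:
  fixes g g' :: "real \<Rightarrow> real"
  assumes "0 \<le> a" "a \<le> b"
    and d: "\<And>x. x \<in> {a..b} \<Longrightarrow> (g has_real_derivative g' x) (at x within {0..})"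
    and m: "\<And>x. x \<in> {a..b} \<Longrightarrow> g' x \<ge> m"
  shows "g b - g a \<ge> m * (b - a)"
proof -
  have "\<exists>x\<in>{a..b}. g b - g a = (*) (g' x) (b - a)"
  proof (rule mvt_very_simple[OF assms(2)])
    fix x assume "a \<le> x" "x \<le> b"
    then have "(g has_real_derivative g' x) (at x within {a..b})"
      using d[of x] assms(1) by (auto intro: DERIV_subset)
    then show "(g has_derivative (*) (g' x)) (at x within {a..b})"
      by (rule has_field_derivative_imp_has_derivative)
  qed
  then obtain x where "x \<in> {a..b}" "g b - g a = g' x * (b - a)" by auto
  moreover have "m * (b - a) \<le> g' x * (b - a)" using m[OF \<open>x \<in> _\<close>] assms(2) by (intro mult_right_mono) auto
  ultimately show ?thesis by simp
qed

lemma deriv_le: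
  fixes g g' :: "real \<Rightarrow> real"
  assumes "0 \<le> a" "a \<le> b"
    and d: "\<And>x. x \<in> {a..b} \<Longrightarrow> (g has_real_derivative g' x) (at x within {0..})"
    and m: "\<And>x. x \<in> {a..b} \<Longrightarrow> g' x \<le> M"
  shows "g b - g a \<le> M * (b - a)"
proof -
  have "(-M) * (b - a) \<le> (\<lambda>x. - g x) b - (\<lambda>x. - g x) a"
    by (rule deriv_ge[OF assms(1,2), where g'="\<lambda>x. - g' x"]) (auto intro!: derivative_eq_intros d m)
  then show ?thesis by simp
qed

lemma neg_deriv_right:
  fixes g :: "real \<Rightarrow> real"
  assumes "x \<ge> 0" "(g has_real_derivative D) (at x within {0..})" "D < 0"
  shows "\<exists>t>x. g t < g x"
proof -
  have "((\<lambda>y. (g y - g x) / (y - x)) \<longlongrightarrow> D) (at x within {0..})"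
    using assms(2) by (simp add: has_field_derivative_iff)
  then have "eventually (\<lambda>y. (g y - g x) / (y - x) < 0) (at x within {0..})"
    using assms(3) by (rule order_tendstoD)
  then obtain d where d: "d > 0" "\<And>y. y \<in> {0..} \<Longrightarrow> y \<noteq> x \<Longrightarrow> dist y x < d \<Longrightarrow> (g y - g x) / (y - x) < 0"
    unfolding eventually_at by blast
  have "(g (x + d/2) - g x) / (x + d/2 - x) < 0" using d assms(1) by (intro d(2)) (auto simp: dist_real_def)
  then have "g (x + d/2) < g x" using d(1) by (simp add: divide_less_0_iff)
  then show ?thesis using d(1) by (intro exI[of _ "x + d/2"]) auto
qed

lemma cont_left_le:
  fixes g :: "real \<Rightarrow> real"
  assumes "continuous_on {a..b} g" "a < b" "\<And>t. t \<in> {a..<b} \<Longrightarrow> g t \<le> c"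
  shows "g b \<le> c"
  using continuous_le_on_closure[of "{a..<b}" g b c] assms by simp

lemma cont_left_ge:
  fixes g :: "real \<Rightarrow> real"
  assumes "continuous_on {a..b} g" "a < b" "\<And>t. t \<in> {a..<b} \<Longrightarrow> g t \<ge> c"
  shows "g b \<ge> c"
  using continuous_ge_on_closure[of "{a..<b}" g b c] assms by simp

lemma first_hit:
  fixes g :: "real \<Rightarrow> real"
  assumes c: "continuous_on {a..b} g" and "a \<le> b" "g a > 0" "g b \<le> 0"
  shows "\<exists>t1\<in>{a<..b}. g t1 = 0 \<and> (\<forall>t\<in>{a..<t1}. g t > 0)"
proof -
  define Z where "Z = {a..b} \<inter> g -` {..0}"
  have cl: "closed Z" unfolding Z_def by (rule continuous_closed_preimage[OF c]) auto
  have ne: "b \<in> Z" using assms by (auto simp: Z_def)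
  have bdd: "bdd_below Z" unfolding Z_def by (auto intro: bdd_belowI[of _ a])
  define t1 where "t1 = Inf Z"
  have t1Z: "t1 \<in> Z" unfolding t1_def using closed_contains_Inf[OF _ bdd cl] ne by blast
  have t1a: "t1 > a"
  proof -
    have "t1 \<ge> a" using t1Z by (auto simp: Z_def)
    moreover have "t1 \<noteq> a" using t1Z assms(3) by (auto simp: Z_def)
    ultimately show ?thesis by simp
  qed
  have pos: "g t > 0" if "t \<in> {a..<t1}" for t
  proof (rule ccontr)
    assume "\<not> g t > 0"
    then have "t \<in> Z" using that t1Z by (auto simp: Z_def)
    then have "t1 \<le> t" unfolding t1_def by (rule cInf_lower[OF _ bdd])
    then show False using that by simp
  qed
  have "g t1 \<ge> 0"
    by (rule cont_left_ge[OF continuous_on_subset[OF c] t1a]) (use t1Z pos in \<open>auto simp: Z_def less_imp_le\<close>)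
  then have "g t1 = 0" using t1Z by (auto simp: Z_def)
  then show ?thesis using t1a t1Z pos by (auto simp: Z_def)
qed

lemma tri_aux: "(c::real) > 0 \<Longrightarrow> \<bar>y\<bar> \<le> B \<Longrightarrow> \<bar>c*x - y\<bar> \<le> c*\<bar>x\<bar> + B"
  using abs_triangle_ineq4[of "c*x" y] by (simp add: abs_mult)

locale prob =
  fixes mu sigma c a lam :: real
  assumes sig: "sigma > 0" and cpos: "c > 0" and a1: "a > 1" and lampos: "lam > 0"
begin

definition f where "f z = fA mu lam a z"
definition K where "K = \<bar>mu\<bar> + a"
definition k where "k = 2 / sigma^2"
definition Fs :: "real \<times> real \<Rightarrow> real \<times> real" where
  "Fs x = (snd x, k * (c * fst x - f (snd x)))"
definition Lc where "Lc = 1 + k * (c + K)"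

lemma K_pos: "K > 0" using a1 by (simp add: K_def add_nonneg_pos)
lemma k_pos: "k > 0" using sig by (simp add: k_def)

lemma f_lip: "\<bar>f z - f w\<bar> \<le> K * \<bar>z - w\<bar>"
  unfolding f_def K_def using fA_lip[OF lampos] a1 by simp

lemma f_cont: "continuous_on A f"
proof -
  have "lipschitz_on K UNIV f" unfolding lipschitz_on_def using f_lip K_pos by (auto simp: dist_real_def)
  then show ?thesis using lipschitz_on_continuous_on continuous_on_subset by blast
qed

lemma f0_pos: "f 0 > 0" unfolding f_def using fA0_pos[OF lampos a1] .

lemma f_up: "p \<ge> 0 \<Longrightarrow> f p \<le> f 0 + K * p"
  using f_lip[of p 0] by simp

lemma Fs_lip: "norm (Fs x - Fs y) \<le> Lc * norm (x - y)"
proof -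
  obtain v p v' p' where x: "x = (v,p)" and y: "y = (v',p')" by fastforce
  have nv: "\<bar>v - v'\<bar> \<le> norm (x - y)" using norm_fst_le[of "v - v'" "p - p'"] by (simp add: x y)
  have np: "\<bar>p - p'\<bar> \<le> norm (x - y)" using norm_snd_le[of "p - p'" "v - v'"] by (simp add: x y)
  have n1: "norm (Fs x - Fs y) \<le> \<bar>p - p'\<bar> + \<bar>k * (c * v - f p) - k * (c * v' - f p')\<bar>"
    using norm_Pair_le[of "p - p'" "k * (c * v - f p) - k * (c * v' - f p')"] by (simp add: x y Fs_def)
  have "k * (c * v - f p) - k * (c * v' - f p') = k * (c * (v - v') - (f p - f p'))"
    by (simp add: algebra_simps)
  then have n2: "\<bar>k * (c * v - f p) - k * (c * v' - f p')\<bar> = k * \<bar>c * (v - v') - (f p - f p')\<bar>"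
    using k_pos by (simp add: abs_mult)
  have "\<bar>c * (v - v') - (f p - f p')\<bar> \<le> c * \<bar>v - v'\<bar> + K * \<bar>p - p'\<bar>"
    using f_lip[of p p'] cpos by (intro tri_aux)
  then have n3: "k * \<bar>c * (v - v') - (f p - f p')\<bar> \<le> k * (c * \<bar>v - v'\<bar> + K * \<bar>p - p'\<bar>)"
    using k_pos by (intro mult_left_mono) auto
  have "norm (Fs x - Fs y) \<le> \<bar>p - p'\<bar> + k * (c * \<bar>v - v'\<bar> + K * \<bar>p - p'\<bar>)"
    using n1 n2 n3 by linarith
  also have "\<dots> \<le> norm (x - y) + k * (c * norm (x - y) + K * norm (x - y))"
    using nv np k_pos cpos K_pos by (intro add_mono mult_left_mono) auto
  also have "\<dots> = Lc * norm (x - y)" by (simp add: Lc_def algebra_simps)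
  finally show ?thesis .
qed

lemma Lc_pos: "Lc > 0" using k_pos cpos K_pos by (simp add: Lc_def add_pos_nonneg)

sublocale lipode Fs Lc
  by unfold_locales (rule Lc_pos, rule Fs_lip)

definition V where "V p0 t = fst (S (0,p0) t)"
definition P where "P p0 t = snd (S (0,p0) t)"
definition Q where "Q p0 t = k * (c * V p0 t - f (P p0 t))"
definition C where "C t = 2 * exp (2 * Lc * t)"

lemma V_deriv:
  assumes "t \<ge> 0" shows "(V p0 has_real_derivative P p0 t) (at t within {0..})"
proof -
  have "((\<lambda>x. fst (S (0,p0) x)) has_derivative (\<lambda>h. fst (h *\<^sub>R Fs (S (0,p0) t)))) (at t within {0..})"
    by (rule has_derivative_fst) (use S_deriv[OF assms] in \<open>simp add: has_vector_derivative_def\<close>)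
  then have "((\<lambda>x. fst (S (0,p0) x)) has_derivative (*) (P p0 t)) (at t within {0..})"
    by (rule has_derivative_eq_rhs) (auto simp: fun_eq_iff Fs_def P_def)
  then show ?thesis by (simp add: has_field_derivative_def V_def[abs_def])
qed

lemma P_deriv:
  assumes "t \<ge> 0" shows "(P p0 has_real_derivative Q p0 t) (at t within {0..})"
proof -
  have "((\<lambda>x. snd (S (0,p0) x)) has_derivative (\<lambda>h. snd (h *\<^sub>R Fs (S (0,p0) t)))) (at t within {0..})"
    by (rule has_derivative_snd) (use S_deriv[OF assms] in \<open>simp add: has_vector_derivative_def\<close>)
  then have "((\<lambda>x. snd (S (0,p0) x)) has_derivative (*) (Q p0 t)) (at t within {0..})"
    by (rule has_derivative_eq_rhs) (auto simp: fun_eq_iff Fs_def P_def V_def Q_def)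
  then show ?thesis by (simp add: has_field_derivative_def P_def[abs_def])
qed

lemma V0: "V p0 0 = 0" by (simp add: V_def S_0)
lemma P0: "P p0 0 = p0" by (simp add: P_def S_0)

lemma V_cont: "continuous_on A (V p0)"
  unfolding V_def[abs_def] by (intro continuous_intros S_cont)
lemma P_cont: "continuous_on A (P p0)"
  unfolding P_def[abs_def] by (intro continuous_intros S_cont)
lemma Q_cont: "continuous_on A (Q p0)"
  unfolding Q_def[abs_def]
  by (intro continuous_intros V_cont continuous_on_compose2[OF f_cont[of UNIV] P_cont]) auto

lemma S_dep':
  assumes "t \<ge> 0"
  shows "norm (S (0,p0) t - S (0,p1) t) \<le> C t * \<bar>p0 - p1\<bar>"
  using S_dep[OF assms, of "(0,p0)" "(0,p1)"] by (simp add: C_def)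

lemma S_split: "S (0,p0) t - S (0,p1) t = (fst (S (0,p0) t) - fst (S (0,p1) t), snd (S (0,p0) t) - snd (S (0,p1) t))"
  by (simp add: prod_eq_iff)

lemma V_dep: "t \<ge> 0 \<Longrightarrow> \<bar>V p0 t - V p1 t\<bar> \<le> C t * \<bar>p0 - p1\<bar>"
proof -
  assume t: "t \<ge> 0"
  have "norm (fst (S (0,p0) t) - fst (S (0,p1) t)) \<le> norm (S (0,p0) t - S (0,p1) t)"
    by (subst S_split) (rule norm_fst_le)
  then show ?thesis using S_dep'[OF t, of p0 p1] unfolding V_def real_norm_def by linarith
qed

lemma P_dep: "t \<ge> 0 \<Longrightarrow> \<bar>P p0 t - P p1 t\<bar> \<le> C t * \<bar>p0 - p1\<bar>"
proof -
  assume t: "t \<ge> 0"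
  have "norm (snd (S (0,p0) t) - snd (S (0,p1) t)) \<le> norm (S (0,p0) t - S (0,p1) t)"
    by (subst S_split) (rule norm_snd_le)
  then show ?thesis using S_dep'[OF t, of p0 p1] unfolding P_def real_norm_def by linarith
qed

lemma Q_dep: 
  assumes "t \<ge> 0" shows "\<bar>Q p0 t - Q p1 t\<bar> \<le> k * (c + K) * C t * \<bar>p0 - p1\<bar>"
proof -
  have "Q p0 t - Q p1 t = k * (c * (V p0 t - V p1 t) - (f (P p0 t) - f (P p1 t)))"
    by (simp add: Q_def algebra_simps)
  then have "\<bar>Q p0 t - Q p1 t\<bar> = k * \<bar>c * (V p0 t - V p1 t) - (f (P p0 t) - f (P p1 t))\<bar>"
    using k_pos by (simp add: abs_mult)
  also have "\<dots> \<le> k * (c * \<bar>V p0 t - V p1 t\<bar> + K * \<bar>P p0 t - P p1 t\<bar>)"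
    using f_lip[of "P p0 t" "P p1 t"] cpos k_pos
    by (intro mult_left_mono tri_aux) auto
  also have "\<dots> \<le> k * (c * (C t * \<bar>p0 - p1\<bar>) + K * (C t * \<bar>p0 - p1\<bar>))"
    using V_dep[OF assms] P_dep[OF assms] cpos K_pos k_pos
    by (intro mult_left_mono add_mono) auto
  finally show ?thesis by (simp add: algebra_simps)
qed

lemma C_pos: "C t > 0" unfolding C_def by simp
lemma C_mono: "s \<le> t \<Longrightarrow> C s \<le> C t" unfolding C_def using Lc_pos by (intro mult_left_mono) auto

end

context prob begin

definition Aset where "Aset = {p0. 0 < p0 \<and> (\<exists>t\<ge>0. P p0 t < 0)}"
definition Bset where "Bset = {p0. 0 < p0 \<and> (\<exists>x\<ge>0. (\<forall>t\<in>{0..x}. P p0 t > 0) \<and> Q p0 x > 0)}"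

lemma A_open: "open Aset"
  unfolding open_dist
proof (intro ballI)
  fix p0 assume "p0 \<in> Aset"
  then obtain t where p0: "p0 > 0" and t: "t \<ge> 0" "P p0 t < 0" by (auto simp: Aset_def)
  define e where "e = min p0 (- P p0 t / C t)"
  have e: "e > 0" using p0 t C_pos[of t] by (simp add: e_def divide_pos_pos divide_neg_pos)
  have "y \<in> Aset" if "dist y p0 < e" for y
  proof -
    have y: "\<bar>y - p0\<bar> < e" using that by (simp add: dist_real_def)
    then have "y > 0" unfolding e_def by (simp add: abs_less_iff)
    have "C t * \<bar>y - p0\<bar> < C t * e" using y C_pos[of t] by simp
    also have "C t * e \<le> - P p0 t"
    proof -
      have "e \<le> - P p0 t / C t" by (simp add: e_def)
      then have "e * C t \<le> (- P p0 t / C t) * C t" using C_pos[of t] by (intro mult_right_mono) auto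
      then show ?thesis using C_pos[of t] by (simp add: mult.commute)
    qed
    finally have "P y t < 0" using P_dep[OF t(1), of y p0] by linarith
    then show ?thesis using \<open>y > 0\<close> t by (auto simp: Aset_def)
  qed
  then show "\<exists>e>0. \<forall>y. dist y p0 < e \<longrightarrow> y \<in> Aset" using e by blast
qed

lemma B_open: "open Bset"
  unfolding open_dist
proof (intro ballI)
  fix p0 assume "p0 \<in> Bset"
  then obtain x where p0: "p0 > 0" and x: "x \<ge> 0" "\<forall>t\<in>{0..x}. P p0 t > 0" "Q p0 x > 0"
    by (auto simp: Bset_def)
  obtain tm where tm: "tm \<in> {0..x}" "\<forall>s\<in>{0..x}. P p0 tm \<le> P p0 s"
    using continuous_attains_inf[of "{0..x}" "P p0"] x(1) P_cont by auto
  define m where "m = P p0 tm"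
  have m: "m > 0" using tm x by (simp add: m_def)
  define D where "D = k * (c + K) * C x"
  have D: "D > 0" using k_pos cpos K_pos C_pos[of x] by (simp add: D_def)
  define e where "e = min p0 (min (m / C x) (Q p0 x / D))"
  have e: "e > 0" using p0 m x C_pos[of x] D by (simp add: e_def)
  have "y \<in> Bset" if "dist y p0 < e" for y
  proof -
    have y: "\<bar>y - p0\<bar> < e" using that by (simp add: dist_real_def)
    then have "y > 0" unfolding e_def by (simp add: abs_less_iff)
    have "P y t > 0" if t: "t \<in> {0..x}" for t
    proof -
      have "C t * \<bar>y - p0\<bar> \<le> C x * \<bar>y - p0\<bar>" using C_mono[of t x] t by (intro mult_right_mono) auto
      also have "\<dots> < C x * e" using y C_pos[of x] by simp
      also have "C x * e \<le> m"
      proof -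
        have "e \<le> m / C x" by (simp add: e_def)
        then show ?thesis using C_pos[of x] by (simp add: pos_le_divide_eq mult.commute)
      qed
      finally show ?thesis using P_dep[of t y p0] t tm(2) unfolding m_def by force
    qed
    moreover have "Q y x > 0"
    proof -
      have "D * \<bar>y - p0\<bar> < D * e" using y D by simp
      also have "D * e \<le> Q p0 x"
      proof -
        have "e \<le> Q p0 x / D" by (simp add: e_def)
        then show ?thesis using D by (simp add: pos_le_divide_eq mult.commute)
      qed
      finally show ?thesis using Q_dep[OF x(1), of y p0] unfolding D_def by linarith
    qed
    ultimately show ?thesis using \<open>y > 0\<close> x(1) by (auto simp: Bset_def)
  qed
  then show "\<exists>e>0. \<forall>y. dist y p0 < e \<longrightarrow> y \<in> Bset" using e by blast
qed

lemma B_pos: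
  assumes "p0 \<in> Bset" "t \<ge> 0"
  shows "P p0 t > 0"
proof -
  obtain x where x: "x \<ge> 0" "\<forall>t\<in>{0..x}. P p0 t > 0" "Q p0 x > 0"
    using assms by (auto simp: Bset_def)
  have Qpos: "Q p0 T > 0" if T: "T \<ge> x" for T
  proof (rule ccontr)
    assume "\<not> Q p0 T > 0"
    then obtain t1 where t1: "t1 \<in> {x<..T}" "Q p0 t1 = 0" "\<forall>t\<in>{x..<t1}. Q p0 t > 0"
      using first_hit[of x T "Q p0"] Q_cont T x(3) by auto
    have Qge: "Q p0 s \<ge> 0" if "s \<in> {x..t1}" for s
    proof (cases "s = t1")
      case False then have "s \<in> {x..<t1}" using that by auto
      then show ?thesis using t1(3) by (auto intro: less_imp_le)
    qed (use t1 in auto)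
    define m1 where "m1 = P p0 x"
    have m1: "m1 > 0" using x by (simp add: m1_def)
    have Pge: "P p0 s \<ge> m1" if s: "s \<in> {x..t1}" for s
    proof -
      have "P p0 s - P p0 x \<ge> 0 * (s - x)"
        by (rule deriv_ge[where g'="Q p0"]) (use s x Qge P_deriv in auto)
      then show ?thesis by (simp add: m1_def)
    qed
    define \<epsilon> where "\<epsilon> = c * m1 / (2 * K)"
    have \<epsilon>: "\<epsilon> > 0" using cpos m1 K_pos by (simp add: \<epsilon>_def)
    obtain \<delta> where \<delta>: "\<delta> > 0" "\<forall>s. dist s t1 < \<delta> \<longrightarrow> dist (Q p0 s) (Q p0 t1) < \<epsilon>"
      using Q_cont[of UNIV, unfolded continuous_on_iff] \<epsilon> by blast
    define t where "t = max x (t1 - \<delta>/2)"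
    have t: "x \<le> t" "t < t1" using t1 \<delta> by (auto simp: t_def)
    have Qle: "Q p0 s \<le> \<epsilon>" if s: "s \<in> {t..t1}" for s
    proof -
      have "dist s t1 < \<delta>" using s \<delta> by (auto simp: t_def dist_real_def)
      then show ?thesis using \<delta>(2) t1(2) by (force simp: dist_real_def)
    qed
    have dV: "V p0 t1 - V p0 t \<ge> m1 * (t1 - t)"
      by (rule deriv_ge[where g'="P p0"]) (use t x Pge V_deriv in auto)
    have dP1: "P p0 t1 - P p0 t \<le> \<epsilon> * (t1 - t)"
      by (rule deriv_le[where g'="Q p0"]) (use t x Qle P_deriv in auto)
    have dP0: "P p0 t1 - P p0 t \<ge> 0 * (t1 - t)"
      by (rule deriv_ge[where g'="Q p0"]) (use t x Qge P_deriv in auto)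
    have "\<bar>f (P p0 t1) - f (P p0 t)\<bar> \<le> K * \<bar>P p0 t1 - P p0 t\<bar>" by (rule f_lip)
    also have "\<dots> \<le> K * (\<epsilon> * (t1 - t))" using dP1 dP0 K_pos by (intro mult_left_mono) auto
    finally have df: "f (P p0 t1) - f (P p0 t) \<le> K * (\<epsilon> * (t1 - t))" by simp
    have "Q p0 t = Q p0 t1 - k * (c * (V p0 t1 - V p0 t) - (f (P p0 t1) - f (P p0 t)))"
      by (simp add: Q_def algebra_simps)
    also have "\<dots> = - k * (c * (V p0 t1 - V p0 t) - (f (P p0 t1) - f (P p0 t)))" using t1 by simp
    also have "c * (V p0 t1 - V p0 t) - (f (P p0 t1) - f (P p0 t)) \<ge> c * (m1 * (t1 - t)) - K * (\<epsilon> * (t1 - t))"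
      using dV df cpos by (smt (verit) mult_left_mono)
    then have "- k * (c * (V p0 t1 - V p0 t) - (f (P p0 t1) - f (P p0 t))) \<le> - k * (c * (m1 * (t1 - t)) - K * (\<epsilon> * (t1 - t)))"
      using k_pos by simp
    also have "c * (m1 * (t1 - t)) - K * (\<epsilon> * (t1 - t)) = (t1 - t) * (c * m1 / 2)"
      using K_pos by (simp add: \<epsilon>_def field_simps)
    finally have "Q p0 t \<le> - k * ((t1 - t) * (c * m1 / 2))" by simp
    also have "\<dots> < 0" using k_pos t cpos m1 by (simp add: mult_pos_pos)
    finally have neg: "Q p0 t < 0" .
    have "t \<in> {x..<t1}" using t by simp
    then have "Q p0 t > 0" using t1(3) by blast
    then show False using neg by simp
  qed
  show ?thesis
  proof (cases "t \<le> x")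
    case True then show ?thesis using x assms by auto
  next
    case False
    have "P p0 t - P p0 x \<ge> 0 * (t - x)"
    proof (rule deriv_ge[where g'="Q p0"])
      fix s assume "s \<in> {x..t}"
      then show "0 \<le> Q p0 s" using Qpos[of s] by auto
    qed (use False x P_deriv in auto)
    moreover have "P p0 x > 0" using x(2) x(1) by simp
    ultimately show ?thesis by simp
  qed
qed

lemma AB_disj: "Aset \<inter> Bset = {}"
  using B_pos by (fastforce simp: Aset_def)

lemma A_ne: "\<exists>p0. p0 \<in> Aset"
proof -
  have "Q 0 0 < 0" using f0_pos k_pos by (simp add: Q_def V0 P0 mult_pos_pos)
  then have "\<exists>t>0. P 0 t < P 0 0"
    using neg_deriv_right[of 0 "P 0" "Q 0 0"] P_deriv[of 0 0] by simp
  then obtain t where t: "t > 0" "P 0 t < P 0 0" by blast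
  then have Pt: "P 0 t < 0" by (simp add: P0)
  define p1 where "p1 = - P 0 t / (2 * C t)"
  have p1: "p1 > 0" using Pt C_pos[of t] by (simp add: p1_def divide_neg_pos)
  have "P p1 t \<le> P 0 t + C t * \<bar>p1 - 0\<bar>" using P_dep[of t p1 0] t by simp
  also have "C t * \<bar>p1 - 0\<bar> = - P 0 t / 2" using p1 C_pos[of t] Pt by (simp add: p1_def)
  finally have "P p1 t < 0" using Pt by simp
  then have "p1 \<in> Aset" using p1 t unfolding Aset_def by (auto intro!: exI[of _ t])
  then show ?thesis by blast
qed

end

context prob begin

lemma large: "\<exists>p0>0. \<forall>t\<ge>0. P p0 t \<ge> 0"
proof -
  define F0 where "F0 = f 0"
  define r where "r = min 1 (c / (K + sigma^2/2))"
  define \<gamma> where "\<gamma> = k * K + r"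
  define b where "b = k * F0"
  define M where "M = b / \<gamma>"
  define T0 where "T0 = 1 / r + 1"
  define p0 where "p0 = 2 * M * exp (\<gamma> * T0) - M"
  have F0: "F0 > 0" using f0_pos by (simp add: F0_def)
  have sK: "K + sigma^2/2 > 0" using K_pos by (simp add: add_pos_nonneg)
  have r: "r > 0" "r \<le> 1" using cpos sK by (auto simp: r_def)
  have rc: "r * (K + sigma^2/2) \<le> c"
  proof -
    have "r \<le> c / (K + sigma^2/2)" by (simp add: r_def)
    then show ?thesis using sK by (simp add: pos_le_divide_eq)
  qed
  have \<gamma>: "\<gamma> > 0" using k_pos K_pos r by (simp add: \<gamma>_def add_pos_pos)
  have M: "M > 0" using k_pos F0 \<gamma> by (simp add: M_def b_def)
  have \<gamma>M: "\<gamma> * M = b" using \<gamma> by (simp add: M_def)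
  have T0: "T0 > 0" using r by (simp add: T0_def add_pos_pos)
  have e1: "exp (\<gamma> * T0) > 1" using \<gamma> T0 by simp
  have p0M: "p0 > M"
  proof -
    have "2 * M * exp (\<gamma> * T0) > 2 * M * 1" using e1 M by (intro mult_strict_left_mono) auto
    then show ?thesis by (simp add: p0_def)
  qed
  have key: "(p0 + M) * exp (- (\<gamma> * T0)) = 2 * M"
    by (simp add: p0_def exp_minus field_simps)
  have kcoef: "k * c - \<gamma> * r \<ge> 0"
  proof -
    have ks: "k * (sigma^2/2) = 1" using sig by (simp add: k_def)
    have "r * r \<le> r" using r by (simp add: mult_left_le_one_le)
    have "k * (r * (K + sigma^2/2)) \<le> k * c" using rc k_pos by (intro mult_left_mono) auto
    then have "k * K * r + r \<le> k * c" using ks by (simp add: algebra_simps)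
    then show ?thesis using \<open>r * r \<le> r\<close> by (simp add: \<gamma>_def algebra_simps)
  qed
  have "P p0 t2 \<ge> 0" if t2: "t2 \<ge> 0" for t2
  proof (rule ccontr)
    assume "\<not> P p0 t2 \<ge> 0"
    then obtain t1 where t1: "t1 \<in> {0<..t2}" "P p0 t1 = 0" "\<forall>t\<in>{0..<t1}. P p0 t > 0"
      using first_hit[of 0 t2 "P p0"] P_cont t2 p0M M by (auto simp: P0)
    have Pnn: "P p0 s \<ge> 0" if "s \<in> {0..t1}" for s
    proof (cases "s = t1")
      case False then have "s \<in> {0..<t1}" using that by auto
      then show ?thesis using t1(3) by (auto intro: less_imp_le)
    qed (use t1 in auto)
    have Vnn: "V p0 s \<ge> 0" if s: "s \<in> {0..t1}" for s
    proof -
      have "V p0 s - V p0 0 \<ge> 0 * (s - 0)"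
        by (rule deriv_ge[where g'="P p0"]) (use s Pnn V_deriv in auto)
      then show ?thesis by (simp add: V0)
    qed
    define E where "E s = exp (\<gamma> * s) * (P p0 s - r * V p0 s + M)" for s
    have Ed: "(E has_real_derivative (\<gamma> * exp (\<gamma> * s) * (P p0 s - r * V p0 s + M) + exp (\<gamma> * s) * (Q p0 s - r * P p0 s))) (at s within {0..})"
      if "s \<ge> 0" for s
      unfolding E_def[abs_def]
      by (rule derivative_eq_intros P_deriv[OF that] V_deriv[OF that] refl | simp add: algebra_simps)+
    have Ed_nn: "\<gamma> * exp (\<gamma> * s) * (P p0 s - r * V p0 s + M) + exp (\<gamma> * s) * (Q p0 s - r * P p0 s) \<ge> 0"
      if s: "s \<in> {0..t1}" for s
    proof -
      have fP: "f (P p0 s) \<le> F0 + K * P p0 s" using f_up[OF Pnn[OF s]] by (simp add: F0_def)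
      have "\<gamma> * (P p0 s - r * V p0 s + M) + (Q p0 s - r * P p0 s)
            = \<gamma> * P p0 s - \<gamma> * r * V p0 s + b + k * c * V p0 s - k * f (P p0 s) - r * P p0 s"
        using \<gamma>M by (simp add: Q_def algebra_simps)
      also have "\<dots> \<ge> \<gamma> * P p0 s - \<gamma> * r * V p0 s + b + k * c * V p0 s - k * (F0 + K * P p0 s) - r * P p0 s"
        using fP k_pos by (simp add: mult_left_mono)
      also have "\<gamma> * P p0 s - \<gamma> * r * V p0 s + b + k * c * V p0 s - k * (F0 + K * P p0 s) - r * P p0 s
          = (k * c - \<gamma> * r) * V p0 s"
        by (simp add: \<gamma>_def b_def algebra_simps)
      also have "\<dots> \<ge> 0" using kcoef Vnn[OF s] by simp
      finally have "\<gamma> * (P p0 s - r * V p0 s + M) + (Q p0 s - r * P p0 s) \<ge> 0" .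
      then have "exp (\<gamma> * s) * (\<gamma> * (P p0 s - r * V p0 s + M) + (Q p0 s - r * P p0 s)) \<ge> 0" by simp
      then show ?thesis by (simp add: algebra_simps)
    qed
    have Dlow: "P p0 s - r * V p0 s \<ge> (p0 + M) * exp (- (\<gamma> * s)) - M" if s: "s \<in> {0..t1}" for s
    proof -
      have "E s - E 0 \<ge> 0 * (s - 0)"
        by (rule deriv_ge[OF _ _ Ed Ed_nn]) (use s t1 in auto)
      then have "E s \<ge> p0 + M" by (simp add: E_def P0 V0)
      then have "exp (- (\<gamma> * s)) * E s \<ge> exp (- (\<gamma> * s)) * (p0 + M)" by simp
      moreover have "exp (- (\<gamma> * s)) * E s = P p0 s - r * V p0 s + M"
        by (simp add: E_def exp_minus field_simps)
      ultimately show ?thesis by (simp add: algebra_simps)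
    qed
    have Dt1: "P p0 t1 - r * V p0 t1 = - r * V p0 t1" using t1 by simp
    show False
    proof (cases "t1 \<le> T0")
      case True
      have "exp (- (\<gamma> * T0)) \<le> exp (- (\<gamma> * t1))" using True \<gamma> by (simp add: mult_left_mono)
      then have "(p0 + M) * exp (- (\<gamma> * T0)) \<le> (p0 + M) * exp (- (\<gamma> * t1))"
        using p0M M by (intro mult_left_mono) auto
      then have "P p0 t1 - r * V p0 t1 \<ge> M" using Dlow[of t1] t1 key by auto
      moreover have "- r * V p0 t1 \<le> 0" using Vnn[of t1] t1 r by auto
      ultimately show False using Dt1 M by linarith
    next
      case False
      have PM: "P p0 s \<ge> M" if s: "s \<in> {0..T0}" for s
      proof -
        have sT: "s \<in> {0..t1}" using s False by auto
        have "exp (- (\<gamma> * T0)) \<le> exp (- (\<gamma> * s))" using s \<gamma> by (simp add: mult_left_mono)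
        then have "(p0 + M) * exp (- (\<gamma> * T0)) \<le> (p0 + M) * exp (- (\<gamma> * s))"
          using p0M M by (intro mult_left_mono) auto
        then have "P p0 s - r * V p0 s \<ge> M" using Dlow[OF sT] key by auto
        moreover have "r * V p0 s \<ge> 0" using Vnn[OF sT] r by simp
        ultimately show ?thesis by linarith
      qed
      have "V p0 T0 - V p0 0 \<ge> M * (T0 - 0)"
        by (rule deriv_ge[where g'="P p0"]) (use T0 PM V_deriv in auto)
      then have VT0: "V p0 T0 \<ge> M * T0" by (simp add: V0)
      have "V p0 t1 - V p0 T0 \<ge> 0 * (t1 - T0)"
        by (rule deriv_ge[where g'="P p0"]) (use T0 False Pnn V_deriv in auto)
      then have "V p0 t1 \<ge> M * T0" using VT0 by simp
      then have "r * V p0 t1 \<ge> r * (M * T0)" using r by (simp add: mult_left_mono)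
      moreover have "r * (M * T0) = M + r * M" using r by (simp add: T0_def field_simps)
      moreover have "P p0 t1 - r * V p0 t1 > - M"
        using Dlow[of t1] t1 p0M M by (smt (verit) exp_gt_zero mult_pos_pos greaterThanAtMost_iff atLeastAtMost_iff)
      moreover have "r * M > 0" using r M by simp
      ultimately show False using Dt1 by linarith
    qed
  qed
  then show ?thesis using p0M M by (intro exI[of _ p0]) auto
qed

end

lemma concave_from_deriv:
  fixes g g' :: "real \<Rightarrow> real"
  assumes d: "\<And>t. t \<ge> 0 \<Longrightarrow> (g has_real_derivative g' t) (at t within {0..})"
    and anti: "\<And>s t. 0 \<le> s \<Longrightarrow> s \<le> t \<Longrightarrow> g' t \<le> g' s"
  shows "concave_on {0..} g"
proof -
  have main: "u * g x + v * g y \<le> g (u * x + v * y)"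
    if xy: "0 \<le> x" "x \<le> y" and uv: "u \<ge> 0" "v \<ge> 0" "u + v = 1" for x y u v
  proof -
    define z where "z = u * x + v * y"
    have "z = x + v * (y - x)" using uv by (simp add: z_def algebra_simps) (metis add_diff_cancel_right' diff_add_eq mult.commute mult_1 ring_class.ring_distribs(1))
    then have xz: "x \<le> z" using uv xy by simp
    have "z = y - u * (y - x)" using uv by (simp add: z_def algebra_simps) (metis add_diff_cancel_left' diff_add_eq mult.commute mult_1 ring_class.ring_distribs(1))
    then have zy: "z \<le> y" using uv xy by simp
    have A: "g z - g x \<ge> g' z * (z - x)"
      by (rule deriv_ge[where g'=g']) (use xy xz d anti in auto)
    have B: "g y - g z \<le> g' z * (y - z)"
      by (rule deriv_le[where g'=g']) (use xy xz zy d anti in auto)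
    have "u * g x + v * g y \<le> u * (g z - g' z * (z - x)) + v * (g z + g' z * (y - z))"
      using A B uv by (intro add_mono mult_left_mono) auto
    also have "\<dots> = (u + v) * g z + g' z * (u * x + v * y - (u + v) * z)"
      by (simp add: algebra_simps)
    also have "\<dots> = g z" using uv by (simp add: z_def)
    finally show ?thesis by (simp add: z_def)
  qed
  show ?thesis unfolding concave_on_iff
  proof (intro conjI ballI allI impI)
    show "convex {0::real..}" by simp
    fix x y :: real and u v :: real
    assume "x \<in> {0..}" "y \<in> {0..}" "0 \<le> u" "0 \<le> v" "u + v = 1"
    then show "u * g x + v * g y \<le> g (u *\<^sub>R x + v *\<^sub>R y)"
      using main[of x y u v] main[of y x v u] by (cases "x \<le> y") (auto simp: add.commute)
  qed
qed

context prob begin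

lemma exists_good: "\<exists>p0>0. p0 \<notin> Aset \<and> p0 \<notin> Bset"
proof (rule ccontr)
  assume "\<not> ?thesis"
  then have sub: "{0<..} \<subseteq> Aset \<union> Bset" by auto
  have "Aset \<inter> Bset \<inter> {0<..} = {}" using AB_disj by auto
  then have "Aset \<inter> {0<..} = {} \<or> Bset \<inter> {0<..} = {}"
    using connectedD[OF connected_Ioi A_open B_open _ sub] by blast
  moreover obtain pa where "pa \<in> Aset" using A_ne by blast
  moreover have "pa > 0" using \<open>pa \<in> Aset\<close> by (simp add: Aset_def)
  moreover obtain pb where pb: "pb > 0" "\<forall>t\<ge>0. P pb t \<ge> 0" using large by blast
  moreover have "pb \<notin> Aset" using pb unfolding Aset_def by force
  moreover have "pb \<in> Aset \<union> Bset" using sub pb(1) by blast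
  ultimately show False by blast
qed

end

context prob begin

context
  fixes p0 assumes gp: "p0 > 0" "p0 \<notin> Aset" "p0 \<notin> Bset"
begin

lemma G_Pnn: "t \<ge> 0 \<Longrightarrow> P p0 t \<ge> 0"
  using gp(1,2) unfolding Aset_def by force

lemma G_notB: "x \<ge> 0 \<Longrightarrow> \<forall>t\<in>{0..x}. P p0 t > 0 \<Longrightarrow> Q p0 x \<le> 0"
  using gp(1,3) unfolding Bset_def by force

lemma G_Ppos: "t2 \<ge> 0 \<Longrightarrow> P p0 t2 > 0"
proof (rule ccontr)
  assume t2: "t2 \<ge> 0" and "\<not> P p0 t2 > 0"
  then obtain t1 where t1: "t1 \<in> {0<..t2}" "P p0 t1 = 0" "\<forall>t\<in>{0..<t1}. P p0 t > 0"
    using first_hit[of 0 t2 "P p0"] P_cont gp(1) by (auto simp: P0)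
  have Qle0: "Q p0 s \<le> 0" if "s \<in> {0..<t1}" for s
    by (rule G_notB) (use that t1(3) in auto)
  have Qt1: "Q p0 t1 \<le> 0"
    by (rule cont_left_le[OF Q_cont _ Qle0]) (use t1 in auto)
  have Qle: "Q p0 s \<le> 0" if "s \<in> {0..t1}" for s
    using that Qle0 Qt1 by (cases "s = t1") auto
  show False
  proof (cases "Q p0 t1 < 0")
    case True
    then obtain t where "t > t1" "P p0 t < P p0 t1"
      using neg_deriv_right[of t1 "P p0" "Q p0 t1"] P_deriv[of t1 p0] t1 by auto
    then show False using G_Pnn[of t] t1 by auto
  next
    case False
    then have Q0: "Q p0 t1 = 0" using Qt1 by simp
    then have cV: "c * V p0 t1 = f 0" using k_pos t1 by (simp add: Q_def)
    define h where "h = min 1 (1 / (2 * k * (K + c)))"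
    have kKc: "k * (K + c) > 0" using k_pos K_pos cpos by simp
    have h: "h > 0" "h \<le> 1" using kKc by (auto simp: h_def)
    have hk: "h * (k * (K + c)) \<le> 1/2"
    proof -
      have "h \<le> 1 / (2 * k * (K + c))" by (simp add: h_def)
      then have "h * (k * (K + c)) \<le> 1 / (2 * k * (K + c)) * (k * (K + c))"
        using kKc by (intro mult_right_mono) auto
      also have "\<dots> = 1/2" using kKc by (simp add: field_simps)
      finally show ?thesis .
    qed
    define \<tau> where "\<tau> = max 0 (t1 - h)"
    have \<tau>: "0 \<le> \<tau>" "\<tau> < t1" "t1 - \<tau> \<le> h" using t1 h by (auto simp: \<tau>_def)
    have Pdec: "P p0 s \<le> P p0 \<tau>" if s: "s \<in> {\<tau>..t1}" for s
    proof -
      have "P p0 s - P p0 \<tau> \<le> 0 * (s - \<tau>)"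
        by (rule deriv_le[where g'="Q p0"]) (use s \<tau> Qle P_deriv in auto)
      then show ?thesis by simp
    qed
    have Ptau: "P p0 \<tau> > 0" using t1(3) \<tau> by auto
    have Qlow: "Q p0 s \<ge> - (k * (K + c) * P p0 \<tau>)" if s: "s \<in> {\<tau>..t1}" for s
    proof -
      have "V p0 t1 - V p0 s \<le> P p0 \<tau> * (t1 - s)"
        by (rule deriv_le[where g'="P p0"]) (use s \<tau> Pdec V_deriv in auto)
      also have "\<dots> \<le> P p0 \<tau> * 1" using s \<tau> h Ptau by (intro mult_left_mono) auto
      finally have dV: "V p0 t1 - V p0 s \<le> P p0 \<tau>" by simp
      have Ps: "0 \<le> P p0 s" "P p0 s \<le> P p0 \<tau>" using G_Pnn[of s] s \<tau> Pdec[OF s] by auto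
      have "f (P p0 s) - f 0 \<le> K * P p0 s" using f_lip[of "P p0 s" 0] Ps by simp
      also have "\<dots> \<le> K * P p0 \<tau>" using Ps K_pos by (intro mult_left_mono) auto
      finally have df: "f (P p0 s) - f 0 \<le> K * P p0 \<tau>" .
      have "- Q p0 s = k * ((f (P p0 s) - f 0) + c * (V p0 t1 - V p0 s))"
        using cV by (simp add: Q_def algebra_simps)
      also have "\<dots> \<le> k * (K * P p0 \<tau> + c * P p0 \<tau>)"
        using df dV cpos k_pos by (intro mult_left_mono add_mono) auto
      finally show ?thesis by (simp add: algebra_simps)
    qed
    have "P p0 t1 - P p0 \<tau> \<ge> - (k * (K + c) * P p0 \<tau>) * (t1 - \<tau>)"
      by (rule deriv_ge[where g'="Q p0"]) (use \<tau> Qlow P_deriv in auto)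
    then have "P p0 t1 - P p0 \<tau> \<ge> - ((k * (K + c) * P p0 \<tau>) * (t1 - \<tau>))"
      by (simp only: mult_minus_left)
    moreover have "(k * (K + c) * P p0 \<tau>) * (t1 - \<tau>) \<le> (k * (K + c) * P p0 \<tau>) * h"
      using \<tau> kKc Ptau by (intro mult_left_mono) auto
    moreover have "(k * (K + c) * P p0 \<tau>) * h \<le> P p0 \<tau> / 2"
    proof -
      have "(k * (K + c) * P p0 \<tau>) * h = (h * (k * (K + c))) * P p0 \<tau>" by (simp add: algebra_simps)
      also have "\<dots> \<le> (1/2) * P p0 \<tau>" using hk Ptau by (intro mult_right_mono) auto
      finally show ?thesis by simp
    qed
    ultimately show False using t1(2) Ptau by linarith
  qed
qed

lemma G_Qle: "t \<ge> 0 \<Longrightarrow> Q p0 t \<le> 0"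
  by (rule G_notB) (auto intro: G_Ppos)

lemma G_Pdec: "0 \<le> s \<Longrightarrow> s \<le> t \<Longrightarrow> P p0 t \<le> P p0 s"
proof -
  assume st: "0 \<le> s" "s \<le> t"
  have "P p0 t - P p0 s \<le> 0 * (t - s)"
    by (rule deriv_le[where g'="Q p0"]) (use st G_Qle P_deriv in auto)
  then show ?thesis by simp
qed

lemma G_Vmono: "0 \<le> s \<Longrightarrow> s \<le> t \<Longrightarrow> V p0 s \<le> V p0 t"
proof -
  assume st: "0 \<le> s" "s \<le> t"
  have "V p0 t - V p0 s \<ge> 0 * (t - s)"
    by (rule deriv_ge[where g'="P p0"]) (use st G_Pnn V_deriv in auto)
  then show ?thesis by simp
qed

definition Bd where "Bd = (f 0 + K * p0) / c"

lemma G_Vbound: "t \<ge> 0 \<Longrightarrow> 0 \<le> V p0 t \<and> V p0 t \<le> Bd"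
proof -
  assume t: "t \<ge> 0"
  have "0 = V p0 0" by (simp add: V0)
  also have "\<dots> \<le> V p0 t" using G_Vmono[of 0 t] t by simp
  finally have v0: "0 \<le> V p0 t" .
  have "c * V p0 t \<le> f (P p0 t)" using G_Qle[OF t] k_pos by (simp add: Q_def mult_le_0_iff)
  also have "\<dots> \<le> f 0 + K * P p0 t" using f_up G_Pnn t by auto
  also have "\<dots> \<le> f 0 + K * p0" using G_Pdec[of 0 t] t K_pos by (simp add: P0)
  finally have "c * V p0 t \<le> f 0 + K * p0" .
  then have "V p0 t \<le> Bd" unfolding Bd_def using cpos by (subst pos_le_divide_eq) (auto simp: mult.commute)
  then show ?thesis using v0 by simp
qed


lemma G_Plim: "(P p0 \<longlongrightarrow> 0) at_top"
proof (rule order_tendstoI)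
  fix y :: real assume "y < 0"
  then show "eventually (\<lambda>t. y < P p0 t) at_top"
    unfolding eventually_at_top_linorder using G_Pnn by (intro exI[of _ 0]) (auto intro: less_le_trans)
next
  fix y :: real assume y: "0 < y"
  have "\<exists>t0\<ge>0. P p0 t0 < y"
  proof (rule ccontr)
    assume "\<not> ?thesis"
    then have Py: "\<And>t. t \<ge> 0 \<Longrightarrow> P p0 t \<ge> y" by force
    define T where "T = (Bd + 1) / y"
    have Bd0: "Bd \<ge> 0" using G_Vbound[of 0] by simp
    have T: "T \<ge> 0" using y Bd0 by (simp add: T_def)
    have "V p0 T - V p0 0 \<ge> y * (T - 0)"
      by (rule deriv_ge[where g'="P p0"]) (use T Py V_deriv in auto)
    then have "V p0 T \<ge> Bd + 1" using y by (simp add: V0 T_def)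
    then show False using G_Vbound[OF T] by simp
  qed
  then obtain t0 where t0: "t0 \<ge> 0" "P p0 t0 < y" by blast
  show "eventually (\<lambda>t. P p0 t < y) at_top"
    unfolding eventually_at_top_linorder using t0 G_Pdec by (intro exI[of _ t0]) (auto intro: le_less_trans)
qed

definition vinf where "vinf = Sup (V p0 ` {0..})"

lemma G_bdd: "bdd_above (V p0 ` {0..})"
  using G_Vbound by (auto intro!: bdd_aboveI[of _ Bd])

lemma G_Vle: "t \<ge> 0 \<Longrightarrow> V p0 t \<le> vinf"
  unfolding vinf_def by (rule cSup_upper[OF _ G_bdd]) auto

lemma G_Vlim: "(V p0 \<longlongrightarrow> vinf) at_top"
proof (rule order_tendstoI)
  fix y :: real assume "y < vinf"
  then obtain x where "x \<in> V p0 ` {0..}" "y < x"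
    unfolding vinf_def using less_cSup_iff[OF _ G_bdd] by blast
  then obtain t0 where t0: "t0 \<ge> 0" "y < V p0 t0" by auto
  show "eventually (\<lambda>t. y < V p0 t) at_top"
    unfolding eventually_at_top_linorder using t0 G_Vmono by (intro exI[of _ t0]) (auto intro: less_le_trans)
next
  fix y :: real assume "vinf < y"
  then show "eventually (\<lambda>t. V p0 t < y) at_top"
    unfolding eventually_at_top_linorder using G_Vle by (intro exI[of _ 0]) (auto intro: le_less_trans)
qed

lemma G_vinf: "vinf = f 0 / c"
proof -
  have fc: "isCont f 0" using f_cont[of UNIV] by (simp add: continuous_on_eq_continuous_at)
  have Ql: "(Q p0 \<longlongrightarrow> k * (c * vinf - f 0)) at_top"
    unfolding Q_def[abs_def]
    by (intro tendsto_intros G_Vlim isCont_tendsto_compose[OF fc G_Plim])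
  define q where "q = k * (c * vinf - f 0)"
  have "q \<le> 0"
    unfolding q_def
    by (rule tendsto_upperbound[OF Ql]) (auto simp: eventually_at_top_linorder intro!: exI[of _ 0] G_Qle)
  moreover have "\<not> q < 0"
  proof
    assume q: "q < 0"
    then have "eventually (\<lambda>t. Q p0 t < q/2) at_top"
      using Ql unfolding q_def[symmetric] by (intro order_tendstoD) auto
    then obtain T0 where T0: "\<And>t. t \<ge> T0 \<Longrightarrow> Q p0 t < q/2"
      unfolding eventually_at_top_linorder by blast
    define T where "T = max 0 T0"
    define s where "s = 2 * (P p0 T + 1) / (- q)"
    have T: "T \<ge> 0" "T \<ge> T0" by (auto simp: T_def)
    have PT: "P p0 T > 0" using G_Ppos[OF T(1)] .
    have s: "s \<ge> 0" using q PT unfolding s_def by (intro divide_nonneg_pos) auto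
    have "P p0 (T + s) - P p0 T \<le> (q/2) * (T + s - T)"
    proof (rule deriv_le[where g'="Q p0"])
      fix y assume "y \<in> {T..T + s}"
      then show "Q p0 y \<le> q/2" using T0[of y] T by auto
    qed (use T s P_deriv in auto)
    also have "(q/2) * (T + s - T) = - (P p0 T + 1)" using q by (simp add: s_def field_simps)
    finally have "P p0 (T + s) < 0" by simp
    then show False using G_Pnn[of "T + s"] T s by simp
  qed
  ultimately have "q = 0" by simp
  then show ?thesis using k_pos cpos by (simp add: q_def field_simps)
qed

lemma G_all: "\<exists>v v' v'' :: real \<Rightarrow> real.
    (\<forall>x\<ge>0. (v has_real_derivative v' x) (at x within {0..})) \<and>
    (\<forall>x\<ge>0. (v' has_real_derivative v'' x) (at x within {0..})) \<and>
    continuous_on {0..} v'' \<and>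
    bounded (v ` {0..}) \<and>
    (\<forall>x\<ge>0. sigma^2 / 2 * v'' x + fA mu lam a (v' x) - c * v x = 0) \<and>
    v 0 = 0 \<and>
    (v \<longlongrightarrow> fA mu lam a 0 / c) at_top \<and>
    v' 0 > 0 \<and>
    (v' \<longlongrightarrow> 0) at_top \<and>
    mono_on {0..} v \<and>
    concave_on {0..} v"
proof (rule exI[of _ "V p0"], rule exI[of _ "P p0"], rule exI[of _ "Q p0"], intro conjI allI impI)
  show "bounded (V p0 ` {0..})"
    unfolding bounded_iff using G_Vbound by (intro exI[of _ Bd]) auto
  show "(V p0 \<longlongrightarrow> fA mu lam a 0 / c) at_top" using G_Vlim G_vinf by (simp add: f_def)
  show "mono_on {0..} (V p0)" by (rule mono_onI) (auto intro: G_Vmono)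
  show "concave_on {0..} (V p0)"
    by (rule concave_from_deriv[OF V_deriv]) (auto intro: G_Pdec)
  fix x :: real assume x: "x \<ge> 0"
  have ks: "sigma^2 / 2 * k = 1" using sig by (simp add: k_def)
  have "sigma^2 / 2 * Q p0 x = c * V p0 x - f (P p0 x)"
    unfolding Q_def by (subst mult.assoc[symmetric]) (simp only: ks mult_1)
  then show "sigma^2 / 2 * Q p0 x + fA mu lam a (P p0 x) - c * V p0 x = 0" unfolding f_def by linarith
qed (use V_deriv P_deriv Q_cont V0 P0 gp G_Plim in auto)

end
end

theorem proposition3p2:
  fixes mu sigma c a lam :: real
  assumes "sigma > 0" and "c > 0" and "a > 0" and "lam > 0"
    and "a > max 1 (2 * mu)"
    and "mu > max c (sigma^2 / 2)"
  shows "\<exists>v v' v'' :: real \<Rightarrow> real.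
    (\<forall>x\<ge>0. (v has_real_derivative v' x) (at x within {0..})) \<and>
    (\<forall>x\<ge>0. (v' has_real_derivative v'' x) (at x within {0..})) \<and>
    continuous_on {0..} v'' \<and>
    bounded (v ` {0..}) \<and>
    (\<forall>x\<ge>0. sigma^2 / 2 * v'' x + fA mu lam a (v' x) - c * v x = 0) \<and>
    v 0 = 0 \<and>
    (v \<longlongrightarrow> fA mu lam a 0 / c) at_top \<and>
    v' 0 > 0 \<and>
    (v' \<longlongrightarrow> 0) at_top \<and>
    mono_on {0..} v \<and>
    concave_on {0..} v"
proof -
  have a1: "a > 1" using assms(5) by simp
  interpret prob mu sigma c a lam by unfold_locales (use assms a1 in auto)
  obtain p0 where "p0 > 0" "p0 \<notin> Aset" "p0 \<notin> Bset" using exists_good by blast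
  then show ?thesis by (rule G_all)
qed

end
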